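(* Let $T$ be an interface element, $\mathbf u\in\mathbf{PC}^2_{int}(T)$, $s\in\{+,-\}$ and $s'$ the opposite sign. For every $i\in\mathcal I^{s'}$ and every $X\in T^s_\ast$, $$\mathbf u^{s'}(A_i)=\mathbf u^s(X)+\big((A_i-X)^T\otimes I_2\big)\mathrm{Vec}(\nabla\mathbf u^s(X))+\big((A_i-\widetilde Y_i)^T\otimes I_2\big)\big(M^s(\widetilde Y_i)-I_4\big)\mathrm{Vec}(\nabla\mathbf u^s(X))+\mathbf R^s_i(X),$$ where $\mathbf R^s_i=\mathbf R^s_{i1}+\mathbf R^s_{i2}+\mathbf R^s_{i3}$ with $$\mathbf R^s_{i1}(X)=\int_0^{\tilde t_i}(1-t)\tfrac{d^2}{dt^2}\mathbf u^s(Y_i(t,X))\,dt,\quad \mathbf R^s_{i2}(X)=\int_{\tilde t_i}^1(1-t)\tfrac{d^2}{dt^2}\mathbf u^{s'}(Y_i(t,X))\,dt,$$ $$\mathbf R^s_{i3}(X)=(1-\tilde t_i)\big((A_i-X)^T\otimes I_2\big)\big(M^s(\widetilde Y_i)-I_4\big)\int_0^{\tilde t_i}\tfrac{d}{dt}\mathrm{Vec}(\nabla\mathbf u^s(Y_i(t,X)))\,dt.$$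
   Context: Lamé parameters $\lambda^s,\mu^s>0$ on $\Omega^s$, $s=\pm$; stress $\sigma^s_{ij}(\mathbf u)=\lambda^s(\nabla\cdot\mathbf u)\delta_{ij}+2\mu^s\epsilon_{ij}(\mathbf u)$, $\epsilon_{ij}(\mathbf u)=\frac12(\partial_{x_j}u_i+\partial_{x_i}u_j)$. $\nabla\mathbf u$ is the Jacobian with $i$-th row $\nabla u_i$; $\mathrm{Vec}$ stacks the columns of a matrix into a vector; $\otimes$ is the Kronecker product; $I_n$ the identity. $T$ is a mesh element (triangle or rectangle) whose interior meets the interface $\Gamma$, which meets $\partial T$ at two points $D,E$ on different edges and is $C^2$ in $T$; $T^s=T\cap\Omega^s$. $\mathbf{PC}^2_{int}(T)$: $\mathbf u$ with $\mathbf u^s=\mathbf u|_{T^s}\in[C^2(\overline{T^s})]^2$, $\mathbf u^+=\mathbf u^-$ and $\sigma^+(\mathbf u^+)\mathbf n=\sigma^-(\mathbf u^-)\mathbf n$ on $\Gamma\cap T$. For $\widetilde X\in\Gamma\cap T$ with unit normal $(\tilde n_1,\tilde n_2)$, $N^s(\widetilde X)$ is the $4\times4$ matrix with rows $((\lambda^s+2\mu^s)\tilde n_1,\mu^s\tilde n_2,\mu^s\tilde n_2,\lambda^s\tilde n_1)$, $(\lambda^s\tilde n_2,\mu^s\tilde n_1,\mu^s\tilde n_1,(\lambda^s+2\mu^s)\tilde n_2)$, $(-\tilde n_2,0,\tilde n_1,0)$, $(0,-\tilde n_2,0,\tilde n_1)$, and $M^-=(N^+)^{-1}N^-$, $M^+=(N^-)^{-1}N^+$.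 Nodes $A_i$, $i\in\mathcal I$, are the vertices of $T$ (linear/bilinear case) or the edge midpoints (rotated $Q_1$ case); $\mathcal I^s=\{i:A_i\in T^s\}$. The segment $l=\overline{DE}$ splits $T$ into $\overline T^+,\overline T^-$ (labelled so that $\overline T^s$ is the part approximating $T^s$). $T_{int}$ is the union of $l_t\cap T$ over all tangent lines $l_t$ to $\Gamma\cap T$, and $T^s_\ast=\overline T^s\cap(T^s\setminus T_{int})$. $Y_i(t,X)=tA_i+(1-t)X$. For $X\in T^s_\ast$ and $i\in\mathcal I^{s'}$ the segment from $X$ to $A_i$ meets $\Gamma\cap T$ at exactly one point $\widetilde Y_i=Y_i(\tilde t_i,X)$, $\tilde t_i\in[0,1]$. *)

theory Defs
  imports "HOL-Analysis.Analysis"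
begin

(* Signs: s :: bool, True = '+', False = '-'; the opposite sign s' is \<not>s. *)

definition jac :: "(real^2 \<Rightarrow> real^2) \<Rightarrow> (real^2) set \<Rightarrow> real^2 \<Rightarrow> real^2^2" where
  "jac f S x = matrix (frechet_derivative f (at x within S))"

definition C2_on :: "(real^2) set \<Rightarrow> (real^2 \<Rightarrow> real^2) \<Rightarrow> bool" where
  "C2_on S f \<longleftrightarrow>
     (\<forall>x\<in>S. f differentiable (at x within S)) \<and>
     (\<forall>x\<in>S. (jac f S) differentiable (at x within S)) \<and>
     (\<forall>i. continuous_on S (\<lambda>x. jac (\<lambda>y. jac f S y $ i) S x))"

definition Vec :: "real^2^2 \<Rightarrow> real^4" where
  "Vec G = vector [G$1$1, G$2$1, G$1$2, G$2$2]"

(* the 2x4 matrix  p^T \<otimes> I_2  (Kronecker product of the row vector p^T with I_2) *)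
definition kronT_I2 :: "real^2 \<Rightarrow> real^4^2" where
  "kronT_I2 p = vector [vector [p$1, 0, p$2, 0], vector [0, p$1, 0, p$2]]"

definition stress :: "real \<Rightarrow> real \<Rightarrow> real^2^2 \<Rightarrow> real^2^2" where
  "stress lam mu G = (\<chi> i j. lam * (G$1$1 + G$2$2) * (if i = j then 1 else 0)
                              + 2 * mu * ((G$i$j + G$j$i) / 2))"

definition Nmat :: "real \<Rightarrow> real \<Rightarrow> real^2 \<Rightarrow> real^4^4" where
  "Nmat lam mu n = vector [
      vector [(lam + 2*mu) * n$1, mu * n$2, mu * n$2, lam * n$1],
      vector [lam * n$2, mu * n$1, mu * n$1, (lam + 2*mu) * n$2],
      vector [- n$2, 0, n$1, 0],
      vector [0, - n$2, 0, n$1]]"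

definition dcurve :: "(real \<Rightarrow> real^2) \<Rightarrow> real \<Rightarrow> real \<Rightarrow> real \<Rightarrow> real^2" where
  "dcurve \<gamma> a b \<tau> = vector_derivative \<gamma> (at \<tau> within {a..b})"

definition C2_arc :: "(real \<Rightarrow> real^2) \<Rightarrow> real \<Rightarrow> real \<Rightarrow> bool" where
  "C2_arc \<gamma> a b \<longleftrightarrow> a < b \<and> inj_on \<gamma> {a..b} \<and>
     (\<forall>\<tau>\<in>{a..b}. \<gamma> differentiable (at \<tau> within {a..b})) \<and>
     (\<forall>\<tau>\<in>{a..b}. dcurve \<gamma> a b differentiable (at \<tau> within {a..b})) \<and>
     continuous_on {a..b} (\<lambda>\<tau>. vector_derivative (dcurve \<gamma> a b) (at \<tau> within {a..b})) \<and>
     (\<forall>\<tau>\<in>{a..b}. dcurve \<gamma> a b \<tau> \<noteq> 0)"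

definition unit_normal :: "(real \<Rightarrow> real^2) \<Rightarrow> real \<Rightarrow> real \<Rightarrow> real \<Rightarrow> real^2" where
  "unit_normal \<gamma> a b \<tau> = (1 / norm (dcurve \<gamma> a b \<tau>)) *\<^sub>R
      vector [- (dcurve \<gamma> a b \<tau>)$2, (dcurve \<gamma> a b \<tau>)$1]"

definition triangle_elem :: "(real^2) set \<Rightarrow> (real^2) set \<Rightarrow> (real^2) set set \<Rightarrow> bool" where
  "triangle_elem T V Ed \<longleftrightarrow> (\<exists>p1 p2 p3. \<not> collinear {p1, p2, p3} \<and>
      T = convex hull {p1, p2, p3} \<and> V = {p1, p2, p3} \<and>
      Ed = {closed_segment p1 p2, closed_segment p2 p3, closed_segment p3 p1})"

definition rectangle_elem :: "(real^2) set \<Rightarrow> (real^2) set \<Rightarrow> (real^2) set set \<Rightarrow> bool" where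
  "rectangle_elem T V Ed \<longleftrightarrow> (\<exists>(a::real^2) b. a$1 < b$1 \<and> a$2 < b$2 \<and> T = cbox a b \<and>
      (let p1 = a; p2 = vector [b$1, a$2]; p3 = b; p4 = vector [a$1, b$2] in
        V = {p1, p2, p3, p4} \<and>
        Ed = {closed_segment p1 p2, closed_segment p2 p3, closed_segment p3 p4, closed_segment p4 p1}))"

(* nodes A_i: vertices (linear / bilinear IFE) or edge midpoints (rotated Q1, rectangles) *)
definition elem_nodes :: "(real^2) set \<Rightarrow> (real^2) set \<Rightarrow> (real^2) set set \<Rightarrow> (real^2) set \<Rightarrow> bool" where
  "elem_nodes T V Ed Nd \<longleftrightarrow>
     ((triangle_elem T V Ed \<or> rectangle_elem T V Ed) \<and> Nd = V) \<or>
     (rectangle_elem T V Ed \<and> Nd = {midpoint p q | p q. p \<in> V \<and> q \<in> V \<and> closed_segment p q \<in> Ed})"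

definition side :: "real^2 \<Rightarrow> real^2 \<Rightarrow> real^2 \<Rightarrow> real" where
  "side D E x = (E$1 - D$1) * (x$2 - D$2) - (E$2 - D$2) * (x$1 - D$1)"

definition Tbar :: "(real^2) set \<Rightarrow> (real^2) set \<Rightarrow> (real^2) set \<Rightarrow> real^2 \<Rightarrow> real^2 \<Rightarrow> (real^2) set" where
  "Tbar T V \<Omega>s D E = {x \<in> T. \<forall>v \<in> V \<inter> \<Omega>s. side D E x * side D E v \<ge> 0}"

definition Tint :: "(real^2) set \<Rightarrow> (real \<Rightarrow> real^2) \<Rightarrow> real \<Rightarrow> real \<Rightarrow> (real^2) set" where
  "Tint T \<gamma> a b = (\<Union>\<tau>\<in>{a..b}. {\<gamma> \<tau> + r *\<^sub>R dcurve \<gamma> a b \<tau> | r. True} \<inter> T)"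

definition interface_elem ::
  "(real^2) set \<Rightarrow> (real^2) set set \<Rightarrow> (real^2) set \<Rightarrow> (real \<Rightarrow> real^2) \<Rightarrow> real \<Rightarrow> real \<Rightarrow> bool" where
  "interface_elem T Ed \<Gamma> \<gamma> a b \<longleftrightarrow>
     interior T \<inter> \<Gamma> \<noteq> {} \<and> C2_arc \<gamma> a b \<and> \<Gamma> \<inter> T = \<gamma> ` {a..b} \<and>
     \<Gamma> \<inter> frontier T = {\<gamma> a, \<gamma> b} \<and>
     (\<exists>e1\<in>Ed. \<exists>e2\<in>Ed. e1 \<noteq> e2 \<and> \<gamma> a \<in> e1 \<and> \<gamma> b \<in> e2)"

end

theory Submission
  imports Defs
begin



lemma vector_4 [simp]:
 "(vector [x,y,z,w] ::('a::zero)^4)$1 = x"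
 "(vector [x,y,z,w] ::('a::zero)^4)$2 = y"
 "(vector [x,y,z,w] ::('a::zero)^4)$3 = z"
 "(vector [x,y,z,w] ::('a::zero)^4)$4 = w"
  unfolding vector_def by simp_all

lemma vec4_eq: "(v::'a^4) = w \<longleftrightarrow> v$1 = w$1 \<and> v$2 = w$2 \<and> v$3 = w$3 \<and> v$4 = w$4"
  by (auto simp: vec_eq_iff forall_4)

lemma vec2_eq: "(v::'a^2) = w \<longleftrightarrow> v$1 = w$1 \<and> v$2 = w$2"
  by (auto simp: vec_eq_iff forall_2)

lemma Vec_nth [simp]: "Vec G $ 1 = G$1$1" "Vec G $ 2 = G$2$1" "Vec G $ 3 = G$1$2" "Vec G $ 4 = G$2$2"
  by (simp_all add: Vec_def)

lemma Vec_linear: "linear Vec"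
  by (rule linearI) (simp_all add: vec4_eq)

lemma Vec_bl: "bounded_linear Vec"
  by (rule linear_conv_bounded_linear[THEN iffD1, OF Vec_linear])

lemma kron_mult: "kronT_I2 p *v Vec G = G *v p"
  by (simp add: vec2_eq matrix_vector_mult_def sum_2 sum_4 kronT_I2_def)

lemma kron_scale: "kronT_I2 (c *\<^sub>R p) *v v = c *\<^sub>R (kronT_I2 p *v v)"
  by (simp add: vec2_eq matrix_vector_mult_def sum_2 sum_4 kronT_I2_def algebra_simps)

lemma Nmat_mult:
  "Nmat l m n *v v = vector [(l + 2*m) * n$1 * v$1 + m * n$2 * v$2 + m * n$2 * v$3 + l * n$1 * v$4,
     l * n$2 * v$1 + m * n$1 * v$2 + m * n$1 * v$3 + (l + 2*m) * n$2 * v$4,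
     - n$2 * v$1 + n$1 * v$3, - n$2 * v$2 + n$1 * v$4]"
  by (simp add: vec4_eq matrix_vector_mult_def sum_4 Nmat_def algebra_simps)

lemma Nmat_inv:
  assumes l: "l > 0" and m: "m > 0" and h: "n$1^2 + n$2^2 = 1"
  shows "invertible (Nmat l m n)"
proof -
  have "x = 0" if "Nmat l m n *v x = 0" for x
  proof -
    let ?n1 = "n$1" and ?n2 = "n$2" and ?x1 = "x$1" and ?x2 = "x$2" and ?x3 = "x$3" and ?x4 = "x$4"
    have e: "(l+2*m)* ?n1* ?x1 + m* ?n2* ?x2 + m* ?n2* ?x3 + l* ?n1* ?x4 = 0"
     "l* ?n2* ?x1 + m* ?n1* ?x2 + m* ?n1* ?x3 + (l+2*m)* ?n2* ?x4 = 0"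
     "-?n2* ?x1 + ?n1* ?x3 = 0" "-?n2* ?x2 + ?n1* ?x4 = 0"
      using that by (simp_all add: Nmat_mult vec4_eq)
    have "(l+2*m)*m* ?x1 = 0" "(l+2*m)*m* ?x2 = 0" "(l+2*m)*m* ?x3 = 0" "(l+2*m)*m* ?x4 = 0"
      using e h by algebra+
    moreover have "(l+2*m)*m \<noteq> 0" using l m by simp
    ultimately show ?thesis by (simp add: vec4_eq)
  qed
  then have "\<exists>B. B ** Nmat l m n = mat 1" by (intro matrix_left_invertible_ker[THEN iffD2] allI impI)
  then show ?thesis by (rule invertible_left_inverse[THEN iffD2])
qed

lemma inv_solve:
  fixes N N' :: "real^4^4"
  assumes "invertible N'" "N' *v v' = N *v v"
  shows "(matrix_inv N' ** N) *v v = v'"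
proof -
  have "matrix_inv N' ** N' = mat 1"
    using assms(1) unfolding invertible_def matrix_inv_def by (rule someI2_ex) auto
  then show ?thesis
    by (metis assms(2) matrix_vector_mul_assoc matrix_vector_mul_lid)
qed

lemma Nmat_stress:
  "(Nmat l m n *v Vec G)$1 = (stress l m G *v n)$1"
  "(Nmat l m n *v Vec G)$2 = (stress l m G *v n)$2"
  by (subst Nmat_mult, simp add: stress_def matrix_vector_mult_def sum_2 algebra_simps)+

lemma Nmat_tang:
  "(Nmat l m n *v Vec G)$3 = - n$2 * G$1$1 + n$1 * G$1$2"
  "(Nmat l m n *v Vec G)$4 = - n$2 * G$2$1 + n$1 * G$2$2"
  by (simp_all add: Nmat_mult)

lemma unit_normal_sq:
  assumes "dcurve \<gamma> a b \<tau> \<noteq> 0"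
  shows "(unit_normal \<gamma> a b \<tau>)$1^2 + (unit_normal \<gamma> a b \<tau>)$2^2 = 1"
proof -
  define d where "d = dcurve \<gamma> a b \<tau>"
  have "norm d ^2 = d$1^2 + d$2^2"
    by (simp add: norm_vec_def L2_set_def sum_2)
  moreover have "norm d \<noteq> 0" using assms d_def by simp
  moreover have "d$1 \<noteq> 0 \<or> d$2 \<noteq> 0" using assms d_def by (auto simp: vec2_eq)
  ultimately have "d$1^2 + d$2^2 \<noteq> 0" using sum_power2_gt_zero_iff by (metis less_irrefl)
  then show ?thesis unfolding unit_normal_def d_def[symmetric]
    by (simp add: power_divide add_divide_distrib[symmetric] \<open>norm d ^2 = d$1^2 + d$2^2\<close>)
qed

lemma unit_normal_tang:
  fixes G H :: "real^2^2"
  assumes "G *v dcurve \<gamma> a b \<tau> = H *v dcurve \<gamma> a b \<tau>"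
  shows "- (unit_normal \<gamma> a b \<tau>)$2 * G$i$1 + (unit_normal \<gamma> a b \<tau>)$1 * G$i$2
       = - (unit_normal \<gamma> a b \<tau>)$2 * H$i$1 + (unit_normal \<gamma> a b \<tau>)$1 * H$i$2"
proof -
  define d where "d = dcurve \<gamma> a b \<tau>"
  have "(G *v d)$i = (H *v d)$i" using assms d_def by simp
  then have "G$i$1 * d$1 + G$i$2 * d$2 = H$i$1 * d$1 + H$i$2 * d$2"
    by (simp add: matrix_vector_mult_def sum_2)
  moreover have "\<And>K::real^2^2. - (unit_normal \<gamma> a b \<tau>)$2 * K$i$1 + (unit_normal \<gamma> a b \<tau>)$1 * K$i$2
     = - (1 / norm d) * (K$i$1 * d$1 + K$i$2 * d$2)"
    unfolding unit_normal_def d_def[symmetric] by (simp add: algebra_simps)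
  ultimately show ?thesis by simp
qed



lemma jac_apply:
  assumes "f differentiable (at x within S)"
  shows "frechet_derivative f (at x within S) h = jac f S x *v h"
proof -
  have "(f has_derivative frechet_derivative f (at x within S)) (at x within S)"
    using frechet_derivative_works[THEN iffD1, OF assms] .
  then have "bounded_linear (frechet_derivative f (at x within S))"
    by (rule has_derivative_bounded_linear)
  then have e: "(\<lambda>y. matrix (frechet_derivative f (at x within S)) *v y) = frechet_derivative f (at x within S)"
    by (rule matrix_vector_mul(3))
  show ?thesis unfolding jac_def using fun_cong[OF e, of h] by (rule sym)
qed

lemma bl_mv: "bounded_linear (\<lambda>M::real^2^2. M *v h)"
proof -
  have "linear (\<lambda>M::real^2^2. M *v h)"
    by (rule linearI) (simp_all add: matrix_vector_mult_add_rdistrib scaleR_matrix_vector_assoc)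
  then show ?thesis by (rule linear_conv_bounded_linear[THEN iffD1])
qed

lemma bl_diff:
  assumes "bounded_linear L" "f differentiable F"
  shows "(\<lambda>x. L (f x)) differentiable F"
proof -
  from assms(2) obtain D where "(f has_derivative D) F" unfolding differentiable_def by blast
  then have "((\<lambda>x. L (f x)) has_derivative (\<lambda>x. L (D x))) F"
    by (rule bounded_linear.has_derivative[OF assms(1)])
  then show ?thesis by (rule differentiableI)
qed

lemma vdw: "f differentiable net \<Longrightarrow> (f has_vector_derivative vector_derivative f net) net"
  by (rule vector_derivative_works[THEN iffD1])

lemma taylor_ibp:
  fixes f :: "real \<Rightarrow> 'a::euclidean_space"
  assumes ab: "a < b"
    and d1: "\<forall>t\<in>{a..b}. f differentiable (at t within {a..b})"
    and d2: "\<forall>t\<in>{a..b}. (\<lambda>t'. vector_derivative f (at t' within {a..b})) differentiable (at t within {a..b})"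
  shows "integral {a..b} (\<lambda>t. (1 - t) *\<^sub>R vector_derivative (\<lambda>t'. vector_derivative f (at t' within {a..b})) (at t within {a..b}))
       = ((1-b) *\<^sub>R vector_derivative f (at b within {a..b}) + f b) - ((1-a) *\<^sub>R vector_derivative f (at a within {a..b}) + f a)"
proof -
  define F1 where "F1 = (\<lambda>t'. vector_derivative f (at t' within {a..b}))"
  define F2 where "F2 = (\<lambda>t. vector_derivative F1 (at t within {a..b}))"
  have h1: "(f has_vector_derivative F1 t) (at t within {a..b})" if "t \<in> {a..b}" for t
    unfolding F1_def using d1 that by (intro vdw) blast
  have h2: "(F1 has_vector_derivative F2 t) (at t within {a..b})" if "t \<in> {a..b}" for t
    unfolding F2_def using d2 that F1_def by (intro vdw) blast
  have h3: "\<And>t. t \<in> {a..b} \<Longrightarrow> ((\<lambda>t. (1 - t) *\<^sub>R F1 t + f t) has_vector_derivative (1 - t) *\<^sub>R F2 t) (at t within {a..b})"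
  proof -
    fix t assume t: "t \<in> {a..b}"
    have "((\<lambda>t. (1 - t) *\<^sub>R F1 t + f t) has_vector_derivative ((1 - t) *\<^sub>R F2 t + (- 1) *\<^sub>R F1 t + F1 t)) (at t within {a..b})"
      by (intro has_vector_derivative_add has_vector_derivative_scaleR h1 h2 t)
         (auto intro!: derivative_eq_intros)
    then show "?thesis t" by simp
  qed
  have "((\<lambda>t. (1 - t) *\<^sub>R F2 t) has_integral (((1-b) *\<^sub>R F1 b + f b) - ((1-a) *\<^sub>R F1 a + f a))) {a..b}"
    using fundamental_theorem_of_calculus[of a b "\<lambda>t. (1 - t) *\<^sub>R F1 t + f t", OF _ h3] ab by simp
  then show ?thesis unfolding F2_def F1_def by (rule integral_unique)
qed

lemma ftc_int:
  fixes f :: "real \<Rightarrow> 'a::euclidean_space"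
  assumes ab: "a \<le> b"
    and d1: "\<forall>t\<in>{a..b}. f differentiable (at t within {a..b})"
  shows "integral {a..b} (\<lambda>t. vector_derivative f (at t within {a..b})) = f b - f a"
proof -
  have "(f has_vector_derivative vector_derivative f (at t within {a..b})) (at t within {a..b})" if "t \<in> {a..b}" for t
    using d1 that by (intro vdw) blast
  then have "((\<lambda>t. vector_derivative f (at t within {a..b})) has_integral f b - f a) {a..b}"
    by (rule fundamental_theorem_of_calculus[OF ab])
  then show ?thesis by (rule integral_unique)
qed


lemma comp_vd:
  fixes f :: "real^2 \<Rightarrow> 'b::real_normed_vector"
  assumes "\<forall>x\<in>S. f differentiable (at x within S)"
    and "c ` I \<subseteq> S" and "t \<in> I" and "(c has_vector_derivative v) (at t within I)"
  shows "((\<lambda>r. f (c r)) has_vector_derivative frechet_derivative f (at (c t) within S) v) (at t within I)"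
proof -
  have fd: "(f has_derivative frechet_derivative f (at x within S)) (at x within S)" if "x \<in> S" for x
    using assms(1) that by (intro frechet_derivative_works[THEN iffD1]) blast
  have "((\<lambda>r. f (c r)) has_derivative
     (\<lambda>h. frechet_derivative f (at (c t) within S) (h *\<^sub>R v))) (at t within I)"
    using has_derivative_in_compose2[where t=S and g=f and g'="\<lambda>x. frechet_derivative f (at x within S)",
        OF fd assms(2) assms(3) assms(4)[unfolded has_vector_derivative_def]] .
  moreover have ct: "c t \<in> S" using assms(2,3) by blast
  moreover have bl: "bounded_linear (frechet_derivative f (at (c t) within S))"
    by (rule has_derivative_bounded_linear[OF fd[OF ct]])
  ultimately show ?thesis unfolding has_vector_derivative_def
    by (simp only: linear_scale[OF bounded_linear.linear[OF bl]])
qed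

lemma comp_vd_jac:
  assumes "\<forall>x\<in>S. f differentiable (at x within S)"
    and "c ` I \<subseteq> S" and "t \<in> I" and "(c has_vector_derivative v) (at t within I)"
  shows "((\<lambda>r. f (c r)) has_vector_derivative jac f S (c t) *v v) (at t within I)"
proof -
  have ct: "c t \<in> S" using assms(2,3) by blast
  then have "f differentiable (at (c t) within S)" using assms(1) by blast
  then have e: "frechet_derivative f (at (c t) within S) v = jac f S (c t) *v v" by (rule jac_apply)
  show ?thesis using comp_vd[OF assms] unfolding e .
qed

lemma Y_vd: "((\<lambda>r. r *\<^sub>R A + (1-r) *\<^sub>R X) has_vector_derivative (A - X)) (at t within I)"
  unfolding has_vector_derivative_def
  by (auto intro!: derivative_eq_intros simp: algebra_simps)

lemma vd_diff: "(f has_vector_derivative v) F \<Longrightarrow> f differentiable F"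
  unfolding has_vector_derivative_def by (rule differentiableI)




lemma fin_alg:
  fixes uA usX a0 a1 a2 b0 uY :: "'a::real_vector"
  shows "uA = usX + a0 + c *\<^sub>R (b0 - a0) + ((c *\<^sub>R a1 + uY - (a0 + usX)) + (uA - (c *\<^sub>R a2 + uY)) + c *\<^sub>R (a2 - b0 - a1 + a0))"
  by (simp add: algebra_simps)

theorem mainTheorem5:
  fixes \<Omega> :: "bool \<Rightarrow> (real^2) set" and \<Gamma> :: "(real^2) set"
    and lam mu :: "bool \<Rightarrow> real"
    and T V Nd :: "(real^2) set" and Ed :: "(real^2) set set"
    and \<gamma> :: "real \<Rightarrow> real^2" and a b :: real
    and u :: "bool \<Rightarrow> real^2 \<Rightarrow> real^2"
    and s :: bool and A X :: "real^2" and tt \<tau> :: real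
  assumes lame: "\<And>r. lam r > 0" "\<And>r. mu r > 0"
    and dom_open: "\<And>r. open (\<Omega> r)"
    and dom_disj: "\<Omega> True \<inter> \<Omega> False = {}"
    and Gamma_interface: "\<Gamma> \<subseteq> frontier (\<Omega> True) \<inter> frontier (\<Omega> False)"
    and Gamma_disj: "\<And>r. \<Gamma> \<inter> \<Omega> r = {}"
    and T_cover: "T \<subseteq> \<Omega> True \<union> \<Omega> False \<union> \<Gamma>"
    and nodes: "elem_nodes T V Ed Nd"
    and ielem: "interface_elem T Ed \<Gamma> \<gamma> a b"
    (* u \<in> PC^2_int(T) *)
    and u_C2: "\<And>r. C2_on (closure (T \<inter> \<Omega> r)) (u r)"
    and u_cont: "\<And>y. y \<in> \<Gamma> \<inter> T \<Longrightarrow> u True y = u False y"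
    and u_flux: "\<And>\<sigma>. \<sigma> \<in> {a..b} \<Longrightarrow>
        stress (lam True) (mu True) (jac (u True) (closure (T \<inter> \<Omega> True)) (\<gamma> \<sigma>)) *v unit_normal \<gamma> a b \<sigma>
      = stress (lam False) (mu False) (jac (u False) (closure (T \<inter> \<Omega> False)) (\<gamma> \<sigma>)) *v unit_normal \<gamma> a b \<sigma>"
    (* node A_i with i \<in> I^{s'} and X \<in> T^s_* *)
    and A_node: "A \<in> Nd" and A_side: "A \<in> T \<inter> \<Omega> (\<not> s)"
    and X_star: "X \<in> Tbar T V (\<Omega> s) (\<gamma> a) (\<gamma> b) \<inter> ((T \<inter> \<Omega> s) - Tint T \<gamma> a b)"
    (* \<tilde>Y_i = Y_i(\<tilde>t_i, X) is the unique point of the segment [X, A_i] on \<Gamma> \<inter> T *)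
    and tt_range: "tt \<in> {0..1}"
    and tt_hit: "tt *\<^sub>R A + (1 - tt) *\<^sub>R X \<in> \<Gamma> \<inter> T"
    and tt_unique: "\<And>t. t \<in> {0..1} \<Longrightarrow> t *\<^sub>R A + (1 - t) *\<^sub>R X \<in> \<Gamma> \<inter> T \<Longrightarrow> t = tt"
    and tau: "\<tau> \<in> {a..b}" "\<gamma> \<tau> = tt *\<^sub>R A + (1 - tt) *\<^sub>R X"
  shows
    "let Y = (\<lambda>t. t *\<^sub>R A + (1 - t) *\<^sub>R X);
         Yt = Y tt;
         S = (\<lambda>r. closure (T \<inter> \<Omega> r));
         n = unit_normal \<gamma> a b \<tau>;
         Ms = matrix_inv (Nmat (lam (\<not> s)) (mu (\<not> s)) n) ** Nmat (lam s) (mu s) n;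
         g = Vec (jac (u s) (S s) X);
         d2 = (\<lambda>f I t. vector_derivative
                 (\<lambda>t'. vector_derivative (\<lambda>r. f (Y r)) (at t' within I)) (at t within I));
         R1 = integral {0..tt} (\<lambda>t. (1 - t) *\<^sub>R d2 (u s) {0..tt} t);
         R2 = integral {tt..1} (\<lambda>t. (1 - t) *\<^sub>R d2 (u (\<not> s)) {tt..1} t);
         R3 = (1 - tt) *\<^sub>R (kronT_I2 (A - X) *v ((Ms - mat 1) *v
                 integral {0..tt} (\<lambda>t. vector_derivative (\<lambda>r. Vec (jac (u s) (S s) (Y r)))
                                        (at t within {0..tt}))))
     in u (\<not> s) A = u s X + kronT_I2 (A - X) *v g
                     + kronT_I2 (A - Yt) *v ((Ms - mat 1) *v g)
                     + (R1 + R2 + R3)"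
  
proof -
  define Y where "Y = (\<lambda>t::real. t *\<^sub>R A + (1 - t) *\<^sub>R X)"
  define S where "S = (\<lambda>r. closure (T \<inter> \<Omega> r))"
  define n where "n = unit_normal \<gamma> a b \<tau>"
  define Ms where "Ms = matrix_inv (Nmat (lam (\<not> s)) (mu (\<not> s)) n) ** Nmat (lam s) (mu s) n"
  define J1 where "J1 = jac (u s) (S s)"
  define J2 where "J2 = jac (u (\<not> s)) (S (\<not> s))"
  define Yt where "Yt = Y tt"
  define d2 where "d2 = (\<lambda>(f::real^2\<Rightarrow>real^2) I t. vector_derivative
                 (\<lambda>t'. vector_derivative (\<lambda>r. f (Y r)) (at t' within I)) (at t within I))"
  define R1 where "R1 = integral {0..tt} (\<lambda>t. (1 - t) *\<^sub>R d2 (u s) {0..tt} t)"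
  define R2 where "R2 = integral {tt..1} (\<lambda>t. (1 - t) *\<^sub>R d2 (u (\<not> s)) {tt..1} t)"
  define R3 where "R3 = (1 - tt) *\<^sub>R (kronT_I2 (A - X) *v ((Ms - mat 1) *v
                 integral {0..tt} (\<lambda>t. vector_derivative (\<lambda>r. Vec (J1 (Y r)))
                                        (at t within {0..tt}))))"
  define P where "P = kronT_I2 (A - X)"
  have ud: "\<And>r. \<forall>x\<in>S r. u r differentiable (at x within S r)"
    using u_C2 unfolding C2_on_def S_def by blast
  have Jd: "\<And>r. \<forall>x\<in>S r. jac (u r) (S r) differentiable (at x within S r)"
    using u_C2 unfolding C2_on_def S_def by blast
  have Sclosed: "\<And>r. closed (S r)" unfolding S_def by simp
  have TT: "closed T \<and> convex T"
  proof -
    have "triangle_elem T V Ed \<or> rectangle_elem T V Ed" using nodes unfolding elem_nodes_def by blast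
    then show ?thesis
    proof
      assume "triangle_elem T V Ed"
      then obtain p1 p2 p3 where "T = convex hull {p1, p2, p3}" unfolding triangle_elem_def by blast
      then show ?thesis by (simp add: compact_imp_closed compact_convex_hull finite_imp_compact convex_convex_hull)
    next
      assume "rectangle_elem T V Ed"
      then obtain p q where "T = cbox p q" unfolding rectangle_elem_def by blast
      then show ?thesis by (simp add: closed_cbox convex_box)
    qed
  qed
  have ab: "a < b" and inj: "inj_on \<gamma> {a..b}"
    and \<gamma>diff: "\<forall>\<sigma>\<in>{a..b}. \<gamma> differentiable (at \<sigma> within {a..b})"
    and dnz: "\<forall>\<sigma>\<in>{a..b}. dcurve \<gamma> a b \<sigma> \<noteq> 0"
    and \<Gamma>T: "\<Gamma> \<inter> T = \<gamma> ` {a..b}" and \<Gamma>F: "\<Gamma> \<inter> frontier T = {\<gamma> a, \<gamma> b}"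
    using ielem unfolding interface_elem_def C2_arc_def by auto
  have XT: "X \<in> T" "X \<in> \<Omega> s" using X_star by auto
  have AT: "A \<in> T" "A \<in> \<Omega> (\<not> s)" using A_side by auto
  have disj: "\<Omega> s \<inter> \<Omega> (\<not> s) = {}" using dom_disj by (cases s) auto
  have cov: "T \<subseteq> \<Omega> s \<union> \<Omega> (\<not> s) \<union> \<Gamma>" using T_cover by (cases s) auto
  have Y0: "Y 0 = X" and Y1: "Y 1 = A" unfolding Y_def by simp_all
  have YT: "\<And>t. t \<in> {0..1} \<Longrightarrow> Y t \<in> T"
  proof -
    fix t :: real assume "t \<in> {0..1}"
    then show "Y t \<in> T" unfolding Y_def using convexD[of T A X t "1 - t"] TT XT AT by auto
  qed
  have tt0: "tt \<noteq> 0"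
  proof
    assume "tt = 0"
    then have "X \<in> \<Gamma>" using tt_hit by simp
    then show False using Gamma_disj[of s] XT by blast
  qed
  have tt1: "tt \<noteq> 1"
  proof
    assume "tt = 1"
    then have "A \<in> \<Gamma>" using tt_hit by simp
    then show False using Gamma_disj[of "\<not> s"] AT by blast
  qed
  have ttp: "0 < tt" "tt < 1" using tt0 tt1 tt_range by auto
  have Yom: "\<And>t. t \<in> {0..1} \<Longrightarrow> t \<noteq> tt \<Longrightarrow> Y t \<in> \<Omega> s \<union> \<Omega> (\<not> s)"
  proof -
    fix t :: real assume t: "t \<in> {0..1}" "t \<noteq> tt"
    have "Y t \<notin> \<Gamma>" using tt_unique[of t] t YT[of t] unfolding Y_def by auto
    then show "Y t \<in> \<Omega> s \<union> \<Omega> (\<not> s)" using cov YT[OF t(1)] by auto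
  qed
  have Ycont: "continuous_on U Y" for U unfolding Y_def by (intro continuous_intros)
  have seg1: "Y ` {0..<tt} \<subseteq> \<Omega> s"
  proof -
    have c: "connected (Y ` {0..<tt})" by (rule connected_continuous_image[OF Ycont]) simp
    have sub: "Y ` {0..<tt} \<subseteq> \<Omega> s \<union> \<Omega> (\<not> s)"
    proof
      fix y assume "y \<in> Y ` {0..<tt}"
      then obtain t where t: "t \<in> {0..<tt}" "y = Y t" by auto
      then show "y \<in> \<Omega> s \<union> \<Omega> (\<not> s)" using Yom[of t] ttp by auto
    qed
    have "\<Omega> s \<inter> Y ` {0..<tt} \<noteq> {}" using Y0 XT ttp by (metis IntI atLeastLessThan_iff empty_iff image_eqI order_refl)
    then have "\<Omega> (\<not> s) \<inter> Y ` {0..<tt} = {}"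
      using connectedD[OF c dom_open dom_open, of s "\<not> s"] disj sub by blast
    then show ?thesis using sub by blast
  qed
  have seg2: "Y ` {tt<..1} \<subseteq> \<Omega> (\<not> s)"
  proof -
    have c: "connected (Y ` {tt<..1})" by (rule connected_continuous_image[OF Ycont]) simp
    have sub: "Y ` {tt<..1} \<subseteq> \<Omega> s \<union> \<Omega> (\<not> s)"
    proof
      fix y assume "y \<in> Y ` {tt<..1}"
      then obtain t where t: "t \<in> {tt<..1}" "y = Y t" by auto
      then show "y \<in> \<Omega> s \<union> \<Omega> (\<not> s)" using Yom[of t] ttp by auto
    qed
    have "\<Omega> (\<not> s) \<inter> Y ` {tt<..1} \<noteq> {}" using Y1 AT ttp by (metis IntI greaterThanAtMost_iff empty_iff image_eqI order_refl)
    then have "\<Omega> s \<inter> Y ` {tt<..1} = {}"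
      using connectedD[OF c dom_open dom_open, of s "\<not> s"] disj sub by blast
    then show ?thesis using sub by blast
  qed
  have I1: "Y ` {0..tt} \<subseteq> S s"
  proof -
    have "Y ` {0..<tt} \<subseteq> S s" unfolding S_def using seg1 YT ttp
      by (auto intro!: closure_subset[THEN subsetD])
    then have "Y ` closure {0..<tt} \<subseteq> S s" by (rule image_closure_subset[OF Ycont Sclosed])
    then show ?thesis using ttp by simp
  qed
  have I2: "Y ` {tt..1} \<subseteq> S (\<not> s)"
  proof -
    have "Y ` {tt<..1} \<subseteq> S (\<not> s)" unfolding S_def using seg2 YT ttp
      by (auto intro!: closure_subset[THEN subsetD])
    then have "Y ` closure {tt<..1} \<subseteq> S (\<not> s)" by (rule image_closure_subset[OF Ycont Sclosed])
    then show ?thesis using ttp by simp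
  qed
  have \<gamma>cont: "continuous_on {a..b} \<gamma>"
    using \<gamma>diff differentiable_imp_continuous_within continuous_on_eq_continuous_within by blast
  have \<gamma>in: "\<gamma> ` {a..b} \<subseteq> S r" for r
  proof -
    have "\<gamma> \<sigma> \<in> S r" if \<sigma>: "\<sigma> \<in> {a<..<b}" for \<sigma>
    proof -
      have g\<Gamma>: "\<gamma> \<sigma> \<in> \<Gamma>" "\<gamma> \<sigma> \<in> T" using \<Gamma>T \<sigma> by auto
      have "\<gamma> \<sigma> \<notin> frontier T"
      proof
        assume "\<gamma> \<sigma> \<in> frontier T"
        then have "\<gamma> \<sigma> = \<gamma> a \<or> \<gamma> \<sigma> = \<gamma> b" using \<Gamma>F g\<Gamma> by blast
        then have "\<sigma> = a \<or> \<sigma> = b" using inj_onD[OF inj, of \<sigma> a] inj_onD[OF inj, of \<sigma> b] \<sigma> ab by auto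
        then show False using \<sigma> by auto
      qed
      then have gi: "\<gamma> \<sigma> \<in> interior T" using g\<Gamma> TT by (simp add: frontier_def closure_closed)
      have "\<gamma> \<sigma> \<in> closure (\<Omega> r)" using g\<Gamma> Gamma_interface by (cases r) (auto simp: frontier_def)
      then have "\<gamma> \<sigma> \<in> closure (interior T \<inter> \<Omega> r)"
        using open_Int_closure_subset[of "interior T" "\<Omega> r"] gi by blast
      moreover have "closure (interior T \<inter> \<Omega> r) \<subseteq> S r" unfolding S_def
        by (intro closure_mono) (use interior_subset in blast)
      ultimately show ?thesis by blast
    qed
    then have "\<gamma> ` {a<..<b} \<subseteq> S r" by blast
    then have "\<gamma> ` closure {a<..<b} \<subseteq> S r"
      by (intro image_closure_subset[OF _ Sclosed]) (use \<gamma>cont ab in simp_all)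
    then show ?thesis using ab by simp
  qed
  have YtG: "Yt = \<gamma> \<tau>" unfolding Yt_def Y_def using tau by simp
  have dcv: "(\<gamma> has_vector_derivative dcurve \<gamma> a b \<tau>) (at \<tau> within {a..b})"
    unfolding dcurve_def using \<gamma>diff tau(1) vector_derivative_works by blast
  have tder: "((\<lambda>\<sigma>. u r (\<gamma> \<sigma>)) has_vector_derivative jac (u r) (S r) (\<gamma> \<tau>) *v dcurve \<gamma> a b \<tau>) (at \<tau> within {a..b})" for r
    by (rule comp_vd_jac[OF ud \<gamma>in tau(1) dcv])
  have ueq: "\<And>\<sigma>. \<sigma> \<in> {a..b} \<Longrightarrow> u (\<not> s) (\<gamma> \<sigma>) = u s (\<gamma> \<sigma>)"
    using u_cont \<Gamma>T by (cases s) auto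
  have tang: "J2 Yt *v dcurve \<gamma> a b \<tau> = J1 Yt *v dcurve \<gamma> a b \<tau>"
  proof -
    have "((\<lambda>\<sigma>. u (\<not> s) (\<gamma> \<sigma>)) has_vector_derivative J1 Yt *v dcurve \<gamma> a b \<tau>) (at \<tau> within {a..b})"
      using has_vector_derivative_transform[OF tau(1) ueq tder[of s]] YtG J1_def by simp
    then have "vector_derivative (\<lambda>\<sigma>. u (\<not> s) (\<gamma> \<sigma>)) (at \<tau> within {a..b}) = J1 Yt *v dcurve \<gamma> a b \<tau>"
      by (rule vector_derivative_within_closed_interval[OF ab tau(1)])
    moreover have "vector_derivative (\<lambda>\<sigma>. u (\<not> s) (\<gamma> \<sigma>)) (at \<tau> within {a..b}) = J2 Yt *v dcurve \<gamma> a b \<tau>"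
      using vector_derivative_within_closed_interval[OF ab tau(1) tder[of "\<not> s"]] YtG J2_def by simp
    ultimately show ?thesis by simp
  qed
  have jump: "Ms *v Vec (J1 Yt) = Vec (J2 Yt)"
  proof -
    have nn: "n$1^2 + n$2^2 = 1" unfolding n_def using unit_normal_sq dnz tau(1) by blast
    have inv: "invertible (Nmat (lam (\<not> s)) (mu (\<not> s)) n)" by (rule Nmat_inv[OF lame nn])
    have fl: "stress (lam (\<not> s)) (mu (\<not> s)) (J2 Yt) *v n = stress (lam s) (mu s) (J1 Yt) *v n"
      using u_flux[OF tau(1)] YtG unfolding J1_def J2_def S_def n_def by (cases s) auto
    have "Nmat (lam (\<not> s)) (mu (\<not> s)) n *v Vec (J2 Yt) = Nmat (lam s) (mu s) n *v Vec (J1 Yt)"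
      unfolding vec4_eq Nmat_stress Nmat_tang using fl unit_normal_tang[OF tang, folded n_def]
      by (simp add: vec2_eq)
    then show ?thesis unfolding Ms_def by (rule inv_solve[OF inv])
  qed

  have Yvd: "(Y has_vector_derivative (A - X)) (at t within I)" for t I unfolding Y_def by (rule Y_vd)
  have f1d: "((\<lambda>r. u s (Y r)) has_vector_derivative J1 (Y t) *v (A - X)) (at t within {0..tt})" if "t \<in> {0..tt}" for t
    unfolding J1_def by (rule comp_vd_jac[OF ud I1 that Yvd])
  have f1v: "vector_derivative (\<lambda>r. u s (Y r)) (at t within {0..tt}) = J1 (Y t) *v (A - X)" if "t \<in> {0..tt}" for t
    by (rule vector_derivative_within_closed_interval[OF ttp(1) that f1d[OF that]])
  have J1Yd: "(\<lambda>r. J1 (Y r)) differentiable (at t within {0..tt})" if "t \<in> {0..tt}" for t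
    unfolding J1_def by (rule vd_diff[OF comp_vd[OF Jd I1 that Yvd]])
  have F1d: "(\<lambda>t'. vector_derivative (\<lambda>r. u s (Y r)) (at t' within {0..tt})) differentiable (at t within {0..tt})" if "t \<in> {0..tt}" for t
  proof (rule differentiable_transform_within[OF _ zero_less_one that])
    show "(\<lambda>r. J1 (Y r) *v (A - X)) differentiable (at t within {0..tt})"
      by (rule bl_diff[OF bl_mv J1Yd[OF that]])
    show "\<And>x'. x' \<in> {0..tt} \<Longrightarrow> dist x' t < 1 \<Longrightarrow> J1 (Y x') *v (A - X) = vector_derivative (\<lambda>r. u s (Y r)) (at x' within {0..tt})"
      using f1v by simp
  qed
  have R1v: "R1 = ((1 - tt) *\<^sub>R (J1 Yt *v (A - X)) + u s Yt) - ((J1 X *v (A - X)) + u s X)"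
  proof -
    have "R1 = ((1-tt) *\<^sub>R vector_derivative (\<lambda>r. u s (Y r)) (at tt within {0..tt}) + u s (Y tt)) - ((1-0) *\<^sub>R vector_derivative (\<lambda>r. u s (Y r)) (at 0 within {0..tt}) + u s (Y 0))"
      unfolding R1_def d2_def using taylor_ibp[OF ttp(1), of "\<lambda>r. u s (Y r)"] vd_diff[OF f1d] F1d by auto
    then show ?thesis using f1v[of tt] f1v[of 0] ttp Y0 Yt_def by simp
  qed
  have f2d: "((\<lambda>r. u (\<not> s) (Y r)) has_vector_derivative J2 (Y t) *v (A - X)) (at t within {tt..1})" if "t \<in> {tt..1}" for t
    unfolding J2_def by (rule comp_vd_jac[OF ud I2 that Yvd])
  have f2v: "vector_derivative (\<lambda>r. u (\<not> s) (Y r)) (at t within {tt..1}) = J2 (Y t) *v (A - X)" if "t \<in> {tt..1}" for t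
    by (rule vector_derivative_within_closed_interval[OF ttp(2) that f2d[OF that]])
  have J2Yd: "(\<lambda>r. J2 (Y r)) differentiable (at t within {tt..1})" if "t \<in> {tt..1}" for t
    unfolding J2_def by (rule vd_diff[OF comp_vd[OF Jd I2 that Yvd]])
  have F2d: "(\<lambda>t'. vector_derivative (\<lambda>r. u (\<not> s) (Y r)) (at t' within {tt..1})) differentiable (at t within {tt..1})" if "t \<in> {tt..1}" for t
  proof (rule differentiable_transform_within[OF _ zero_less_one that])
    show "(\<lambda>r. J2 (Y r) *v (A - X)) differentiable (at t within {tt..1})"
      by (rule bl_diff[OF bl_mv J2Yd[OF that]])
    show "\<And>x'. x' \<in> {tt..1} \<Longrightarrow> dist x' t < 1 \<Longrightarrow> J2 (Y x') *v (A - X) = vector_derivative (\<lambda>r. u (\<not> s) (Y r)) (at x' within {tt..1})"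
      using f2v by simp
  qed
  have R2v: "R2 = u (\<not> s) A - ((1 - tt) *\<^sub>R (J2 Yt *v (A - X)) + u (\<not> s) Yt)"
  proof -
    have "R2 = ((1-1) *\<^sub>R vector_derivative (\<lambda>r. u (\<not> s) (Y r)) (at 1 within {tt..1}) + u (\<not> s) (Y 1)) - ((1-tt) *\<^sub>R vector_derivative (\<lambda>r. u (\<not> s) (Y r)) (at tt within {tt..1}) + u (\<not> s) (Y tt))"
      unfolding R2_def d2_def using taylor_ibp[OF ttp(2), of "\<lambda>r. u (\<not> s) (Y r)"] vd_diff[OF f2d] F2d by auto
    then show ?thesis using f2v[of tt] ttp Y1 Yt_def by simp
  qed
  have R3v: "R3 = (1 - tt) *\<^sub>R (P *v ((Ms - mat 1) *v (Vec (J1 Yt) - Vec (J1 X))))"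
  proof -
    have "integral {0..tt} (\<lambda>t. vector_derivative (\<lambda>r. Vec (J1 (Y r))) (at t within {0..tt}))
          = Vec (J1 (Y tt)) - Vec (J1 (Y 0))"
      using ftc_int[of 0 tt "\<lambda>r. Vec (J1 (Y r))"] ttp bl_diff[OF Vec_bl J1Yd] by auto
    then show ?thesis unfolding R3_def P_def using Y0 Yt_def by simp
  qed
  have ucont: "u s Yt = u (\<not> s) Yt" using tt_hit u_cont unfolding Yt_def Y_def by (cases s) auto
  have kronA: "kronT_I2 (A - Yt) *v z = (1 - tt) *\<^sub>R (P *v z)" for z
  proof -
    have "A - Yt = (1 - tt) *\<^sub>R (A - X)" unfolding Yt_def Y_def by (simp add: algebra_simps)
    then show ?thesis unfolding P_def by (simp add: kron_scale)
  qed
  have Pw: "P *v Vec (J1 X) = J1 X *v (A - X)" "P *v Vec (J1 Yt) = J1 Yt *v (A - X)"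
      "P *v Vec (J2 Yt) = J2 Yt *v (A - X)"
    unfolding P_def by (simp_all only: kron_mult)
  have Mm: "(Ms - mat 1) *v z = Ms *v z - z" for z :: "real^4"
    by (simp only: matrix_vector_mult_diff_rdistrib matrix_vector_mul_lid)
  have e1: "P *v ((Ms - mat 1) *v (Vec (J1 Yt) - Vec (J1 X)))
      = J2 Yt *v (A - X) - P *v (Ms *v Vec (J1 X)) - J1 Yt *v (A - X) + J1 X *v (A - X)"
    unfolding Mm matrix_vector_mult_diff_distrib jump Pw by simp
  have e2: "P *v ((Ms - mat 1) *v Vec (J1 X)) = P *v (Ms *v Vec (J1 X)) - J1 X *v (A - X)"
    unfolding Mm matrix_vector_mult_diff_distrib Pw by simp
  have main: "u (\<not> s) A = u s X + P *v Vec (J1 X) + kronT_I2 (A - Yt) *v ((Ms - mat 1) *v Vec (J1 X)) + (R1 + R2 + R3)"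
    unfolding R1v R2v R3v kronA e1 e2 Pw(1) ucont
    by (rule fin_alg)
  note main' = main[unfolded R1_def R2_def R3_def d2_def Ms_def n_def J1_def S_def Yt_def P_def Y_def]
  show ?thesis unfolding Let_def by (rule main')
qed


end
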